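(* Let $p$ be a prime and $n \in \mathbb{N}$. Let $v \in \mathbb{Z}_p^n$ with $\rho(v) \ge 4/p$ and $|v| \ge 2^{18} \log p$, and let $Y \subset [n]$ be such that $|v_Y| \ge |v|/4$. Then $$\rho(v_Y) \le \frac{2^{13}\, |T_\ell(v_Y)|}{p \sqrt{|v|}},$$ where $\ell := 2^{-16} |v|$.
   Context: $\log$ is the natural logarithm. For $w \in \mathbb{Z}_p^m$: $|w|$ is the number of nonzero coordinates of $w$; $\rho(w) := \max_{a \in \mathbb{Z}_p} \Pr\big( \sum_{i=1}^m u_i w_i = a \big)$ with $u$ uniform on $\{-1,1\}^m$; and for $t\ge 0$ $$T_t(w) := \Big\{ k \in \mathbb{Z}_p : \sum_{i=1}^m \Big\| \frac{k \cdot w_i}{p} \Big\|^2 \le t \Big\},$$ where $k \cdot w_i \in \mathbb{Z}$ is the product of the representatives of $k$ and $w_i$ in $\{0,\ldots,p-1\}$, and $\|x\|$ is the distance from $x$ to the nearest integer. For $Y \subset [n]$, $v_Y \in \mathbb{Z}_p^{|Y|}$ is the restriction of $v$ to the coordinates in $Y$. *)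

theory Defs
  imports Complex_Main "HOL-Library.FuncSet" "HOL-Computational_Algebra.Primes"
begin

text \<open>Vectors over Z_p are represented as functions w :: nat => int on a finite index
set I; coordinates are read modulo p (representative w i mod p in {0..p-1}).\<close>

definition supp_size :: "nat \<Rightarrow> nat set \<Rightarrow> (nat \<Rightarrow> int) \<Rightarrow> nat" where
  "supp_size p I w = card {i \<in> I. w i mod int p \<noteq> 0}"

definition rho :: "nat \<Rightarrow> nat set \<Rightarrow> (nat \<Rightarrow> int) \<Rightarrow> real" where
  "rho p I w = Max ((\<lambda>a. real (card {u \<in> PiE I (\<lambda>_. {-1, 1::int}).
                         (\<Sum>i\<in>I. u i * w i) mod int p = a}) / 2 ^ card I) ` {0..<int p})"

definition dnear :: "real \<Rightarrow> real" where
  "dnear x = min (x - of_int \<lfloor>x\<rfloor>) (of_int \<lceil>x\<rceil> - x)"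

definition Tset :: "nat \<Rightarrow> real \<Rightarrow> nat set \<Rightarrow> (nat \<Rightarrow> int) \<Rightarrow> int set" where
  "Tset p t I w = {k \<in> {0..<int p}.
     (\<Sum>i\<in>I. (dnear (real_of_int (k * (w i mod int p)) / real p))\<^sup>2) \<le> t}"

end

theory Submission
  imports Defs "HOL-Analysis.Analysis"
begin


lemma ceil_le_floor1: fixes x :: real shows "real_of_int \<lceil>x\<rceil> \<le> of_int \<lfloor>x\<rfloor> + 1"
proof -
  have a: "of_int \<lceil>x\<rceil> - 1 < x" by linarith
  have b: "x < of_int \<lfloor>x\<rfloor> + 1" by linarith
  have "real_of_int \<lceil>x\<rceil> < of_int (\<lfloor>x\<rfloor> + 2)" using a b by (simp only: of_int_add of_int_numeral)
  hence "\<lceil>x\<rceil> < \<lfloor>x\<rfloor> + 2" by linarith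
  hence "\<lceil>x\<rceil> \<le> \<lfloor>x\<rfloor> + 1" by simp
  thus ?thesis by linarith
qed

lemma cos_pi_abs: "cos (pi * \<bar>z\<bar>) = cos (pi * z)"
  by (simp add: abs_if)

lemma dnear_le: "dnear x \<le> \<bar>x - of_int n\<bar>"
proof -
  have c: "of_int \<lceil>x\<rceil> \<le> of_int \<lfloor>x\<rfloor> + (1::real)"
    using ceil_le_floor1[of x] by linarith
  show ?thesis
  proof (cases "n \<le> \<lfloor>x\<rfloor>")
    case True
    hence "real_of_int n \<le> of_int \<lfloor>x\<rfloor>" by simp
    thus ?thesis unfolding dnear_def using of_int_floor_le[of x] by linarith
  next
    case False
    hence "real_of_int n \<ge> of_int \<lfloor>x\<rfloor> + 1" by (simp add: int_le_real_less)
    thus ?thesis unfolding dnear_def using c le_of_int_ceiling[of x] by linarith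
  qed
qed

lemma dnear_attain: "\<exists>n::int. dnear x = \<bar>x - of_int n\<bar>"
proof -
  have "x - of_int \<lfloor>x\<rfloor> \<ge> 0" "of_int \<lceil>x\<rceil> - x \<ge> 0" by linarith+
  show ?thesis
  proof (cases "x - of_int \<lfloor>x\<rfloor> \<le> of_int \<lceil>x\<rceil> - x")
    case True
    hence "dnear x = \<bar>x - of_int \<lfloor>x\<rfloor>\<bar>" unfolding dnear_def using \<open>x - of_int \<lfloor>x\<rfloor> \<ge> 0\<close> by simp
    thus ?thesis by blast
  next
    case False
    hence "dnear x = \<bar>x - of_int \<lceil>x\<rceil>\<bar>" unfolding dnear_def using \<open>of_int \<lceil>x\<rceil> - x \<ge> 0\<close> by simp
    thus ?thesis by blast
  qed
qed

lemma dnear_nonneg: "dnear x \<ge> 0"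
  using dnear_attain[of x] by auto

lemma dnear_le_half: "dnear x \<le> 1/2"
proof -
  have c: "of_int \<lceil>x\<rceil> \<le> of_int \<lfloor>x\<rfloor> + (1::real)"
    using ceil_le_floor1[of x] by linarith
  thus ?thesis unfolding dnear_def by linarith
qed

lemma dnear_periodic: "dnear (x + of_int n) = dnear x"
  unfolding dnear_def by simp

lemma dnear_add: "dnear (x + y) \<le> dnear x + dnear y"
proof -
  obtain a b where a: "dnear x = \<bar>x - of_int a\<bar>" and b: "dnear y = \<bar>y - of_int b\<bar>"
    using dnear_attain by metis
  have "dnear (x + y) \<le> \<bar>x + y - of_int (a + b)\<bar>" by (rule dnear_le)
  also have "\<dots> \<le> \<bar>x - of_int a\<bar> + \<bar>y - of_int b\<bar>" by simp
  finally show ?thesis using a b by simp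
qed

lemma dnear_cong:
  assumes "p > 0" "a mod int p = b mod int p"
  shows "dnear (real_of_int a / real p) = dnear (real_of_int b / real p)"
proof -
  have "int p dvd (a - b)" using assms(2) by (simp add: mod_eq_dvd_iff)
  then obtain q where q: "a - b = int p * q" by (elim dvdE)
  hence "(a - b) div int p = q" using assms(1) by simp
  have "real_of_int a = real_of_int b + real p * real_of_int q"
    using q by (metis add.commute diff_add_cancel of_int_add of_int_mult of_int_of_nat_eq)
  hence "real_of_int a / real p = real_of_int b / real p + of_int ((a - b) div int p)"
    using assms(1) \<open>(a - b) div int p = q\<close> by (simp add: field_simps)
  thus ?thesis by (simp add: dnear_periodic)
qed

lemma cos_taylor_bound:
  fixes x :: real
  assumes "0 \<le> x" "x \<le> 2"
  shows "cos x \<le> 1 - x^2/3"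
proof (cases "x = 0")
  case True thus ?thesis by simp
next
  case False
  hence "x > 0" using assms by simp
  then obtain t where t: "cos x = (\<Sum>m<4. cos_coeff m * x ^ m) + (cos (t + 1/2 * real 4 * pi) / fact 4) * x ^ 4"
    using Maclaurin_cos_expansion2[of x 4] by auto
  have s: "(\<Sum>m<4. cos_coeff m * x ^ m) = 1 - x^2/2"
    by (simp add: lessThan_nat_numeral cos_coeff_def fact_numeral)
  have "cos (t + 1/2 * real 4 * pi) / fact 4 * x ^ 4 \<le> x^4 / 24"
  proof -
    have "cos (t + 1/2 * real 4 * pi) \<le> 1" by simp
    moreover have "(fact 4::real) = 24" by (simp add: fact_numeral)
    ultimately show ?thesis using \<open>x > 0\<close>
      by (simp add: divide_right_mono mult_right_mono)
  qed
  moreover have "x^4 \<le> 4 * x^2"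
  proof -
    have "x^2 \<le> 2^2" using assms by (intro power_mono) auto
    hence "x^2 \<le> 4" by simp
    hence "x^2 * x^2 \<le> 4 * x^2" by (intro mult_right_mono) auto
    moreover have "x^4 = x^2 * x^2" by (simp add: power4_eq_xxxx power2_eq_square mult.assoc)
    ultimately show ?thesis by linarith
  qed
  ultimately show ?thesis using t s by linarith
qed

lemma abs_cos_pi_bound: "\<bar>cos (pi * y)\<bar> \<le> exp (- 2 * (dnear y)^2)"
proof -
  obtain n where n: "dnear y = \<bar>y - of_int n\<bar>" using dnear_attain by metis
  define t where "t = \<bar>y - of_int n\<bar>"
  have t0: "0 \<le> t" and t1: "t \<le> 1/2" using n dnear_le_half[of y] t_def by auto
  have sn: "sin (of_int n * pi) = 0" using sin_zero_iff_int2 by blast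
  have "(cos (of_int n * pi))^2 = 1" using sn sin_cos_squared_add[of "of_int n * pi"] by simp
  hence cn: "\<bar>cos (of_int n * pi)\<bar> = 1" using power2_eq_1_iff by force
  have "pi * y = pi * (y - of_int n) + of_int n * pi" by (simp add: algebra_simps)
  hence "cos (pi * y) = cos (pi * (y - of_int n)) * cos (of_int n * pi)"
    using sn by (simp add: cos_add)
  hence "\<bar>cos (pi * y)\<bar> = \<bar>cos (pi * (y - of_int n))\<bar>" using cn by (simp add: abs_mult)
  also have "\<dots> = \<bar>cos (pi * t)\<bar>" unfolding t_def by (simp only: cos_pi_abs)
  also have "\<dots> = cos (pi * t)"
  proof -
    have "pi * t \<le> pi / 2" using t1 by (simp add: mult_left_mono[of t "1/2" pi] pi_ge_zero)
    moreover have "0 \<le> pi * t" using t0 by simp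
    ultimately have "cos (pi * t) \<ge> 0" using pi_gt_zero by (intro cos_ge_zero) linarith+
    thus ?thesis by simp
  qed
  also have "\<dots> \<le> 1 - (pi * t)^2/3"
  proof (rule cos_taylor_bound)
    show "0 \<le> pi * t" using t0 by simp
    have "pi * t \<le> 4 * (1/2)" using t0 t1 pi_less_4 by (intro mult_mono) auto
    thus "pi * t \<le> 2" by simp
  qed
  also have "\<dots> \<le> 1 - 2 * t^2"
  proof -
    have "9 * t^2 \<le> pi^2 * t^2" using pi_gt3 by (intro mult_right_mono) (auto simp: power_mono[of 3 pi 2, simplified])
    moreover have "0 \<le> t^2" by simp
    ultimately have "6 * t^2 \<le> pi^2 * t^2" by linarith
    thus ?thesis by (simp add: power_mult_distrib)
  qed
  also have "\<dots> \<le> exp (- 2 * t^2)" using exp_ge_add_one_self[of "-2*t^2"] by simp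
  finally show ?thesis using n t_def by simp
qed

lemma abs_sin_pi_bound: "\<bar>sin (pi * y)\<bar> \<le> pi * dnear y"
proof -
  obtain n where n: "dnear y = \<bar>y - of_int n\<bar>" using dnear_attain by metis
  have sn: "sin (of_int n * pi) = 0" using sin_zero_iff_int2 by blast
  have "(cos (of_int n * pi))^2 = 1" using sn sin_cos_squared_add[of "of_int n * pi"] by simp
  hence cn: "\<bar>cos (of_int n * pi)\<bar> = 1" using power2_eq_1_iff by force
  have "pi * y = pi * (y - of_int n) + of_int n * pi" by (simp add: algebra_simps)
  hence "sin (pi * y) = sin (pi * (y - of_int n)) * cos (of_int n * pi)"
    using sn by (simp add: sin_add)
  hence "\<bar>sin (pi * y)\<bar> = \<bar>sin (pi * (y - of_int n))\<bar>" using cn by (simp add: abs_mult)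
  also have "\<dots> \<le> \<bar>pi * (y - of_int n)\<bar>" by (rule abs_sin_x_le_abs_x)
  also have "\<dots> = pi * dnear y" using n by (simp add: abs_mult)
  finally show ?thesis .
qed

lemma one_minus_cos_bound: "1 - cos (2 * pi * y) \<le> 32 * (dnear y)^2"
proof -
  have "1 - cos (2 * pi * y) = 2 * (sin (pi * y))^2"
    using cos_double_sin[of "pi * y"] by (simp add: mult.assoc)
  also have "\<dots> \<le> 2 * (pi * dnear y)^2"
  proof -
    have "\<bar>sin (pi * y)\<bar>^2 \<le> (pi * dnear y)^2"
      using abs_sin_pi_bound[of y] by (intro power_mono) auto
    thus ?thesis by simp
  qed
  also have "\<dots> \<le> 2 * (4 * dnear y)^2"
    using pi_less_4 dnear_nonneg[of y] by (intro mult_left_mono power_mono mult_right_mono) auto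
  finally show ?thesis by (simp add: power_mult_distrib)
qed



lemma sum_int_nat: "(\<Sum>k\<in>{0..<int p}. f k) = (\<Sum>k<p. f (int k))"
proof -
  have "{0..<int p} = int ` {..<p}" using image_atLeastZeroLessThan_int[of "int p"] by simp
  thus ?thesis by (simp add: sum.reindex)
qed

lemma cis_sum: "cis (sum f A) = (\<Prod>x\<in>A. cis (f x))"
  by (induction A rule: infinite_finite_induct) (auto simp: cis_mult[symmetric])

lemma orth_nat:
  fixes d :: int
  assumes "p > 0"
  shows "(\<Sum>k<p. cis (2 * pi * real k * real_of_int d / real p)) = (if int p dvd d then of_nat p else 0)"
proof (cases "int p dvd d")
  case True
  then obtain q where q: "d = int p * q" by (elim dvdE)
  have "cis (2 * pi * real k * real_of_int d / real p) = 1" for k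
  proof -
    have "2 * pi * real k * real_of_int d / real p = 2 * pi * real_of_int (int k * q)"
      using assms q by (simp add: field_simps)
    thus ?thesis by (simp only: ) (rule cis_multiple_2pi, simp)
  qed
  thus ?thesis using True by simp
next
  case False
  define z where "z = cis (2 * pi * real_of_int d / real p)"
  have zk: "cis (2 * pi * real k * real_of_int d / real p) = z ^ k" for k
  proof -
    have "z ^ k = cis (real k * (2 * pi * real_of_int d / real p))" unfolding z_def by (rule Complex.DeMoivre)
    moreover have "real k * (2 * pi * real_of_int d / real p) = 2 * pi * real k * real_of_int d / real p" by simp
    ultimately show ?thesis by (simp only:)
  qed
  have zp: "z ^ p = 1"
  proof -
    have "z ^ p = cis (2 * pi * real_of_int d)" unfolding z_def Complex.DeMoivre using assms by (simp add: field_simps)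
    also have "\<dots> = 1" by (rule cis_multiple_2pi) simp
    finally show ?thesis .
  qed
  have z1: "z \<noteq> 1"
  proof
    assume "z = 1"
    hence "cos (2 * pi * real_of_int d / real p) = 1" unfolding z_def
      by (metis Re_complex_of_real cis.simps(1) of_real_1)
    then obtain n :: int where n: "2 * pi * real_of_int d / real p = of_int n * 2 * pi"
      using cos_one_2pi_int by blast
    hence "real_of_int d = of_int n * real p" using assms by (simp add: field_simps)
    hence "d = n * int p" by (metis of_int_eq_iff of_int_mult of_int_of_nat_eq)
    thus False using False by simp
  qed
  have "(\<Sum>k<p. cis (2 * pi * real k * real_of_int d / real p)) = (\<Sum>k<p. z ^ k)" using zk by simp
  also have "\<dots> = 0" using z1 zp by (simp add: sum_gp_strict)
  finally show ?thesis using False by simp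
qed

lemma pm1_sum: "(\<Sum>s\<in>{-1, 1::int}. cis (real_of_int s * t)) = complex_of_real (2 * cos t)"
  by (simp add: complex_eq_iff)

lemma fourier_bound:
  fixes p :: nat and I :: "nat set" and v :: "nat \<Rightarrow> int" and a :: int
  assumes "p > 0" "finite I" "a \<in> {0..<int p}"
  shows "real (card {u \<in> PiE I (\<lambda>_. {-1, 1::int}). (\<Sum>i\<in>I. u i * v i) mod int p = a})
        \<le> 2 ^ card I / real p * (\<Sum>k<p. \<Prod>i\<in>I. \<bar>cos (2 * pi * real k * real_of_int (v i) / real p)\<bar>)"
proof -
  define U where "U = PiE I (\<lambda>_. {-1, 1::int})"
  define S where "S u = (\<Sum>i\<in>I. u i * v i)" for u :: "nat \<Rightarrow> int"
  define th where "th k i = 2 * pi * real k * real_of_int (v i) / real p" for k i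
  have finU: "finite U" unfolding U_def using assms(2) by (simp add: finite_PiE)
  have ind: "(if int p dvd d then 1 else 0 :: complex) = (1 / of_nat p) * (\<Sum>k<p. cis (2 * pi * real k * real_of_int d / real p))" for d
    using orth_nat[OF assms(1), of d] assms(1) by simp
  have modeq: "(S u mod int p = a) \<longleftrightarrow> int p dvd (S u - a)" for u
  proof -
    have "a mod int p = a" using assms(3) by simp
    thus ?thesis by (metis mod_eq_dvd_iff)
  qed
  have "complex_of_nat (card {u \<in> U. S u mod int p = a}) = (\<Sum>u\<in>U. if S u mod int p = a then 1 else 0)"
    using finU by (simp add: sum.inter_filter[symmetric])
  also have "\<dots> = (\<Sum>u\<in>U. (1 / of_nat p) * (\<Sum>k<p. cis (2 * pi * real k * real_of_int (S u - a) / real p)))"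
    using modeq ind by simp
  also have "\<dots> = (1 / of_nat p) * (\<Sum>k<p. \<Sum>u\<in>U. cis (- 2 * pi * real k * real_of_int a / real p) * cis (2 * pi * real k * real_of_int (S u) / real p))"
    by (simp add: sum_distrib_left sum.swap[of _ U] cis_mult diff_divide_distrib algebra_simps)
  also have "\<dots> = (1 / of_nat p) * (\<Sum>k<p. cis (- 2 * pi * real k * real_of_int a / real p) * (\<Sum>u\<in>U. cis (2 * pi * real k * real_of_int (S u) / real p)))"
    by (simp only: sum_distrib_left)
  also have "\<dots> = (1 / of_nat p) * (\<Sum>k<p. cis (- 2 * pi * real k * real_of_int a / real p) * (\<Prod>i\<in>I. complex_of_real (2 * cos (th k i))))"
  proof -
    have "(\<Sum>u\<in>U. cis (2 * pi * real k * real_of_int (S u) / real p)) = (\<Prod>i\<in>I. complex_of_real (2 * cos (th k i)))" for k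
    proof -
      have "(\<Sum>u\<in>U. cis (2 * pi * real k * real_of_int (S u) / real p)) = (\<Sum>u\<in>U. \<Prod>i\<in>I. cis (real_of_int (u i) * th k i))"
      proof (rule sum.cong[OF refl])
        fix u
        have "2 * pi * real k * real_of_int (S u) / real p = (\<Sum>i\<in>I. real_of_int (u i) * th k i)"
          unfolding S_def th_def by (simp add: sum_distrib_left sum_divide_distrib algebra_simps)
        thus "cis (2 * pi * real k * real_of_int (S u) / real p) = (\<Prod>i\<in>I. cis (real_of_int (u i) * th k i))"
          by (simp add: cis_sum)
      qed
      also have "\<dots> = (\<Prod>i\<in>I. \<Sum>s\<in>{-1, 1::int}. cis (real_of_int s * th k i))"
        unfolding U_def by (rule prod_sum_PiE[symmetric]) (use assms(2) in auto)
      also have "\<dots> = (\<Prod>i\<in>I. complex_of_real (2 * cos (th k i)))" by (simp only: pm1_sum)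
      finally show ?thesis .
    qed
    thus ?thesis by (simp only:)
  qed
  finally have eq: "complex_of_nat (card {u \<in> U. S u mod int p = a}) = (1 / of_nat p) * (\<Sum>k<p. cis (- 2 * pi * real k * real_of_int a / real p) * (\<Prod>i\<in>I. complex_of_real (2 * cos (th k i))))" .
  have "real (card {u \<in> U. S u mod int p = a}) = Re (complex_of_nat (card {u \<in> U. S u mod int p = a}))" by simp
  also have "\<dots> \<le> cmod (complex_of_nat (card {u \<in> U. S u mod int p = a}))" by (rule complex_Re_le_cmod)
  also have "\<dots> = (1 / real p) * cmod (\<Sum>k<p. cis (- 2 * pi * real k * real_of_int a / real p) * (\<Prod>i\<in>I. complex_of_real (2 * cos (th k i))))"
    unfolding eq by (simp add: norm_mult norm_divide)
  also have "\<dots> \<le> (1 / real p) * (\<Sum>k<p. cmod (cis (- 2 * pi * real k * real_of_int a / real p) * (\<Prod>i\<in>I. complex_of_real (2 * cos (th k i)))))"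
    by (intro mult_left_mono norm_sum) simp
  also have "\<dots> = (1 / real p) * (\<Sum>k<p. \<Prod>i\<in>I. 2 * \<bar>cos (th k i)\<bar>)"
    by (simp add: norm_mult prod_norm[symmetric] abs_mult)
  also have "\<dots> = 2 ^ card I / real p * (\<Sum>k<p. \<Prod>i\<in>I. \<bar>cos (th k i)\<bar>)"
    by (simp add: prod.distrib sum_distrib_left)
  finally show ?thesis unfolding U_def S_def th_def .
qed



definition gs :: "nat \<Rightarrow> nat set \<Rightarrow> (nat \<Rightarrow> int) \<Rightarrow> int \<Rightarrow> real" where
  "gs p I v k = (\<Sum>i\<in>I. (dnear (real_of_int (k * (v i mod int p)) / real p))\<^sup>2)"

lemma Tset_gs: "Tset p t I v = {k \<in> {0..<int p}. gs p I v k \<le> t}"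
  unfolding Tset_def gs_def by simp

lemma gs_nonneg: "gs p I v k \<ge> 0"
  unfolding gs_def by (simp add: sum_nonneg)

lemma rho_le_one:
  assumes "p > 0" "finite I"
  shows "rho p I v \<le> 1"
proof -
  have ne: "(\<lambda>a. real (card {u \<in> PiE I (\<lambda>_. {-1, 1::int}). (\<Sum>i\<in>I. u i * v i) mod int p = a}) / 2 ^ card I) ` {0..<int p} \<noteq> {}"
    using assms by auto
  have "real (card {u \<in> PiE I (\<lambda>_. {-1, 1::int}). (\<Sum>i\<in>I. u i * v i) mod int p = a}) / 2 ^ card I \<le> 1" for a
  proof -
    have "card {u \<in> PiE I (\<lambda>_. {-1, 1::int}). (\<Sum>i\<in>I. u i * v i) mod int p = a} \<le> card (PiE I (\<lambda>_. {-1, 1::int}))"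
      using assms by (intro card_mono) (auto simp: finite_PiE)
    also have "\<dots> = 2 ^ card I" using assms(2) by (simp add: card_PiE numeral_2_eq_2)
    finally show ?thesis by (simp add: divide_le_eq_1)
  qed
  thus ?thesis unfolding rho_def using ne by (subst Max_le_iff) auto
qed

lemma double_bij:
  assumes "odd p"
  shows "(\<lambda>k. (2 * k) mod int p) ` {0..<int p} = {0..<int p}" "inj_on (\<lambda>k. (2 * k) mod int p) {0..<int p}"
proof -
  have p0: "int p > 0" using assms by (cases p) auto
  show inj: "inj_on (\<lambda>k. (2 * k) mod int p) {0..<int p}"
  proof
    fix k k' assume k: "k \<in> {0..<int p}" and k': "k' \<in> {0..<int p}" and eq: "(2 * k) mod int p = (2 * k') mod int p"
    define h where "h = (int p + 1) div 2"
    have h2: "2 * h = int p + 1" unfolding h_def using assms by (auto elim!: oddE)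
    have hk: "h * (2 * k) = k * (int p + 1)" "h * (2 * k') = k' * (int p + 1)" using h2 by (metis mult.commute mult.left_commute)+
    have "k mod int p = (k * (int p + 1)) mod int p" by (simp add: algebra_simps)
    also have "\<dots> = (h * (2 * k)) mod int p" by (simp only: hk)
    also have "\<dots> = (h * ((2 * k) mod int p)) mod int p" by (simp add: mod_mult_right_eq)
    also have "\<dots> = (h * ((2 * k') mod int p)) mod int p" using eq by simp
    also have "\<dots> = (h * (2 * k')) mod int p" by (simp add: mod_mult_right_eq)
    also have "\<dots> = (k' * (int p + 1)) mod int p" by (simp only: hk)
    also have "\<dots> = k' mod int p" by (simp add: algebra_simps)
    finally show "k = k'" using k k' by simp
  qed
  show "(\<lambda>k. (2 * k) mod int p) ` {0..<int p} = {0..<int p}"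
    by (rule endo_inj_surj) (use inj p0 in auto)
qed

lemma rho_bound:
  assumes "p > 0" "odd p" "finite I"
  shows "rho p I v \<le> (1 / real p) * (\<Sum>k\<in>{0..<int p}. exp (- 2 * gs p I v k))"
proof -
  have ne: "(\<lambda>a. real (card {u \<in> PiE I (\<lambda>_. {-1, 1::int}). (\<Sum>i\<in>I. u i * v i) mod int p = a}) / 2 ^ card I) ` {0..<int p} \<noteq> {}"
    using assms by auto
  have cosb: "(\<Prod>i\<in>I. \<bar>cos (2 * pi * real k * real_of_int (v i) / real p)\<bar>) \<le> exp (- 2 * gs p I v ((2 * int k) mod int p))" for k :: nat
  proof -
    have "(\<Prod>i\<in>I. \<bar>cos (2 * pi * real k * real_of_int (v i) / real p)\<bar>)
        \<le> (\<Prod>i\<in>I. exp (- 2 * (dnear (real_of_int (((2 * int k) mod int p) * (v i mod int p)) / real p))\<^sup>2))"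
    proof (rule prod_mono, rule conjI)
      fix i
      show "0 \<le> \<bar>cos (2 * pi * real k * real_of_int (v i) / real p)\<bar>" by simp
      have e: "2 * pi * real k * real_of_int (v i) / real p = pi * (real_of_int (2 * int k * v i) / real p)" by simp
      have "\<bar>cos (2 * pi * real k * real_of_int (v i) / real p)\<bar> \<le> exp (- 2 * (dnear (real_of_int (2 * int k * v i) / real p))\<^sup>2)"
        unfolding e by (rule abs_cos_pi_bound)
      moreover have "dnear (real_of_int (2 * int k * v i) / real p) = dnear (real_of_int (((2 * int k) mod int p) * (v i mod int p)) / real p)"
        using assms(1) by (intro dnear_cong) (auto simp: mod_mult_eq)
      ultimately show "\<bar>cos (2 * pi * real k * real_of_int (v i) / real p)\<bar> \<le> exp (- 2 * (dnear (real_of_int (((2 * int k) mod int p) * (v i mod int p)) / real p))\<^sup>2)" by simp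
    qed
    also have "\<dots> = exp (- 2 * gs p I v ((2 * int k) mod int p))"
      unfolding gs_def using assms(3) by (simp add: exp_sum sum_distrib_left)
    finally show ?thesis .
  qed
  have "(\<Sum>k<p. exp (- 2 * gs p I v ((2 * int k) mod int p))) = (\<Sum>k\<in>{0..<int p}. exp (- 2 * gs p I v ((2 * k) mod int p)))"
    by (simp add: sum_int_nat)
  also have "\<dots> = (\<Sum>k\<in>{0..<int p}. exp (- 2 * gs p I v k))"
    using sum.reindex[OF double_bij(2)[OF assms(2)], of "\<lambda>k. exp (- 2 * gs p I v k)"] double_bij(1)[OF assms(2)]
    by (simp add: comp_def)
  finally have reidx: "(\<Sum>k<p. exp (- 2 * gs p I v ((2 * int k) mod int p))) = (\<Sum>k\<in>{0..<int p}. exp (- 2 * gs p I v k))" .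
  have "real (card {u \<in> PiE I (\<lambda>_. {-1, 1::int}). (\<Sum>i\<in>I. u i * v i) mod int p = a}) / 2 ^ card I \<le> (1 / real p) * (\<Sum>k\<in>{0..<int p}. exp (- 2 * gs p I v k))"
    if a: "a \<in> {0..<int p}" for a
  proof -
    have "real (card {u \<in> PiE I (\<lambda>_. {-1, 1::int}). (\<Sum>i\<in>I. u i * v i) mod int p = a})
        \<le> 2 ^ card I / real p * (\<Sum>k<p. \<Prod>i\<in>I. \<bar>cos (2 * pi * real k * real_of_int (v i) / real p)\<bar>)"
      by (rule fourier_bound[OF assms(1) assms(3) a])
    also have "\<dots> \<le> 2 ^ card I / real p * (\<Sum>k<p. exp (- 2 * gs p I v ((2 * int k) mod int p)))"
      by (intro mult_left_mono sum_mono cosb) simp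
    finally show ?thesis unfolding reidx by (simp add: field_simps)
  qed
  thus ?thesis unfolding rho_def using ne by (subst Max_le_iff) auto
qed



definition sumset :: "nat \<Rightarrow> int set \<Rightarrow> int set \<Rightarrow> int set" where
  "sumset p A B = (\<lambda>(a, b). (a + b) mod int p) ` (A \<times> B)"

lemma range_eq:
  assumes "x \<in> {0..<int p}" "y \<in> {0..<int p}" "x mod int p = y mod int p"
  shows "x = y"
  using assms by simp

lemma translate_inj: "inj_on (\<lambda>y. (y + e) mod int p) {0..<int p}"
proof
  fix x y assume x: "x \<in> {0..<int p}" and y: "y \<in> {0..<int p}" and e: "(x + e) mod int p = (y + e) mod int p"
  have "int p dvd (x + e) - (y + e)" using e by (simp add: mod_eq_dvd_iff)
  hence "int p dvd x - y" by simp
  hence "x mod int p = y mod int p" by (simp add: mod_eq_dvd_iff)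
  thus "x = y" using x y by simp
qed

lemma card_translate:
  assumes "B \<subseteq> {0..<int p}"
  shows "card ((\<lambda>y. (y + e) mod int p) ` B) = card B"
  using assms translate_inj by (intro card_image) (rule inj_on_subset)

lemma sumset_sub: "sumset p A B \<subseteq> {0..<int p}" if "p > 0"
  using that unfolding sumset_def by auto

lemma sumset_ge_A:
  assumes "A \<subseteq> {0..<int p}" "b \<in> B" "finite B"
  shows "card (sumset p A B) \<ge> card A"
proof -
  have "(\<lambda>y. (y + b) mod int p) ` A \<subseteq> sumset p A B"
    unfolding sumset_def using assms(2) by force
  moreover have "finite A" using assms(1) finite_subset by blast
  hence "finite (sumset p A B)" unfolding sumset_def using assms(3) by simp
  ultimately have "card ((\<lambda>y. (y + b) mod int p) ` A) \<le> card (sumset p A B)" by (rule card_mono[rotated])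
  thus ?thesis using card_translate[OF assms(1)] by simp
qed

lemma closed_full:
  assumes p: "prime p" and A: "A \<subseteq> {0..<int p}" "a0 \<in> A"
    and d: "\<not> int p dvd d" and cl: "\<And>x. x \<in> A \<Longrightarrow> (x + d) mod int p \<in> A"
  shows "A = {0..<int p}"
proof -
  have p0: "p > 0" using p prime_gt_0_nat by blast
  have mem: "(a0 + int j * d) mod int p \<in> A" for j :: nat
  proof (induction j)
    case 0
    have "a0 mod int p = a0" using A by auto
    thus ?case using A by simp
  next
    case (Suc j)
    have "((a0 + int j * d) mod int p + d) mod int p \<in> A" using cl[OF Suc] .
    moreover have "((a0 + int j * d) mod int p + d) mod int p = (a0 + int j * d + d) mod int p"
      by (rule mod_add_left_eq)
    moreover have "a0 + int j * d + d = a0 + int (Suc j) * d" by (simp add: algebra_simps)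
    ultimately show ?case by simp
  qed
  have inj: "inj_on (\<lambda>j. (a0 + int j * d) mod int p) {..<p}"
  proof
    fix i j assume i: "i \<in> {..<p}" and j: "j \<in> {..<p}" and e: "(a0 + int i * d) mod int p = (a0 + int j * d) mod int p"
    have "int p dvd (a0 + int i * d) - (a0 + int j * d)" using e by (simp add: mod_eq_dvd_iff)
    hence "int p dvd (int i - int j) * d" by (simp add: algebra_simps)
    moreover have "prime (int p)" using p by simp
    ultimately have "int p dvd (int i - int j) \<or> int p dvd d" using prime_dvd_mult_iff by blast
    hence "int p dvd (int i - int j)" using d by blast
    hence "int i mod int p = int j mod int p" by (simp add: mod_eq_dvd_iff)
    thus "i = j" using i j by simp
  qed
  have c1: "card ((\<lambda>j. (a0 + int j * d) mod int p) ` {..<p}) = p" using card_image[OF inj] by simp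
  have s1: "(\<lambda>j. (a0 + int j * d) mod int p) ` {..<p} \<subseteq> A" using mem by auto
  have fA: "finite A" using A(1) finite_subset by blast
  have "p \<le> card A" using card_mono[OF fA s1] c1 by simp
  moreover have "card A \<le> card {0..<int p}" by (rule card_mono[OF _ A(1)]) simp
  ultimately have "card A = card {0..<int p}" by simp
  thus ?thesis using card_subset_eq[OF _ A(1)] by simp
qed

theorem cauchy_davenport:
  assumes p: "prime p"
  shows "A \<subseteq> {0..<int p} \<Longrightarrow> B \<subseteq> {0..<int p} \<Longrightarrow> A \<noteq> {} \<Longrightarrow> B \<noteq> {}
     \<Longrightarrow> card (sumset p A B) \<ge> min p (card A + card B - 1)"
proof (induction "card B" arbitrary: A B rule: less_induct)
  case less
  note A = less.prems(1) and B = less.prems(2) and Ane = less.prems(3) and Bne = less.prems(4)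
  have p0: "p > 0" using p prime_gt_0_nat by blast
  have finA: "finite A" and finB: "finite B" using A B finite_subset by blast+
  have ssub: "sumset p A B \<subseteq> {0..<int p}" using sumset_sub p0 by blast
  have finS: "finite (sumset p A B)" using ssub finite_subset by blast
  show "card (sumset p A B) \<ge> min p (card A + card B - 1)"
  proof (cases "card B \<le> 1")
    case True
    then obtain b where "b \<in> B" using Bne by blast
    moreover have "card B > 0" using Bne finB by (simp add: card_gt_0_iff)
    hence "card B = 1" using True by linarith
    ultimately show ?thesis using sumset_ge_A[OF A _ finB] by fastforce
  next
    case False
    show ?thesis
    proof (cases "A = {0..<int p}")
      case True
      obtain b where "b \<in> B" using Bne by blast
      hence "card (sumset p A B) \<ge> p" using sumset_ge_A[OF A _ finB] True by fastforce
      thus ?thesis by simp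
    next
      case Anf: False
      have "\<exists>a\<in>A. \<exists>b\<in>B. \<exists>b'\<in>B. (a + b' - b) mod int p \<notin> A"
      proof (rule ccontr)
        assume "\<not> ?thesis"
        hence cl0: "\<And>a b b'. a \<in> A \<Longrightarrow> b \<in> B \<Longrightarrow> b' \<in> B \<Longrightarrow> (a + b' - b) mod int p \<in> A" by blast
        obtain b b' where bb: "b \<in> B" "b' \<in> B" "b \<noteq> b'"
          using False finB by (auto simp: card_le_Suc0_iff_eq)
        have nd: "\<not> int p dvd (b' - b)"
        proof
          assume "int p dvd (b' - b)"
          hence "b' mod int p = b mod int p" by (simp add: mod_eq_dvd_iff)
          moreover have "b' mod int p = b'" "b mod int p = b" using bb B by auto
          ultimately show False using bb by simp
        qed
        obtain a0 where "a0 \<in> A" using Ane by blast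
        have clx: "(x + (b' - b)) mod int p \<in> A" if "x \<in> A" for x
          using cl0[OF that bb(1) bb(2)] by (simp only: add_diff_eq)
        have "A = {0..<int p}"
          by (rule closed_full[OF p A \<open>a0 \<in> A\<close> nd clx])
        thus False using Anf by simp
      qed
      then obtain a b b' where ab: "a \<in> A" "b \<in> B" "b' \<in> B" and nb: "(a + b' - b) mod int p \<notin> A" by blast
      define e where "e = a - b"
      define tr where "tr y = (y + e) mod int p" for y
      define A' where "A' = A \<union> tr ` B"
      define B' where "B' = {y \<in> B. tr y \<in> A}"
      have aA: "a mod int p = a" using ab A by auto
      have bB': "b \<in> B'" unfolding B'_def tr_def e_def using ab aA by simp
      have b'B': "b' \<notin> B'" unfolding B'_def tr_def e_def using nb by (simp add: algebra_simps)
      have B'sub: "B' \<subseteq> B" unfolding B'_def by auto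
      have "B' \<subset> B" using B'sub b'B' ab(3) by blast
      hence cardB': "card B' < card B" using finB by (rule psubset_card_mono[rotated])
      have A'sub: "A' \<subseteq> {0..<int p}" unfolding A'_def tr_def using A p0 by auto
      have A'ne: "A' \<noteq> {}" using Ane A'_def by auto
      have B'ne: "B' \<noteq> {}" using bB' by auto
      have IH: "card (sumset p A' B') \<ge> min p (card A' + card B' - 1)"
        using less.hyps[OF cardB' A'sub _ A'ne B'ne] B'sub B by auto
      have sub: "sumset p A' B' \<subseteq> sumset p A B"
      proof
        fix s assume "s \<in> sumset p A' B'"
        then obtain x y where xy: "x \<in> A'" "y \<in> B'" "s = (x + y) mod int p" unfolding sumset_def by auto
        show "s \<in> sumset p A B"
        proof (cases "x \<in> A")
          case True
          thus ?thesis using xy B'sub unfolding sumset_def by force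
        next
          case False
          then obtain z where z: "z \<in> B" "x = tr z" using xy A'_def by auto
          have "tr y \<in> A" using xy B'_def by auto
          have "s = (z + tr y) mod int p" unfolding xy z tr_def by (simp add: mod_add_left_eq mod_add_right_eq algebra_simps)
          thus ?thesis using z \<open>tr y \<in> A\<close> unfolding sumset_def by (auto intro!: image_eqI[of _ _ "(tr y, z)"] simp: add.commute)
        qed
      qed
      have trB: "card (tr ` B) = card B" unfolding tr_def by (rule card_translate[OF B])
      have trB': "tr ` B' = A \<inter> tr ` B" unfolding B'_def by auto
      have cB': "card B' = card (A \<inter> tr ` B)"
      proof -
        have "inj_on tr B'" unfolding tr_def by (rule inj_on_subset[OF translate_inj]) (use B'sub B in auto)
        thus ?thesis using card_image[of tr B'] trB' by simp
      qed
      have "card A' + card (A \<inter> tr ` B) = card A + card (tr ` B)" unfolding A'_def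
        using card_Un_Int[of A "tr ` B"] finA finB by simp
      hence "card A' + card B' = card A + card B" using cB' trB by simp
      moreover have "card (sumset p A' B') \<le> card (sumset p A B)" using card_mono[OF finS sub] .
      ultimately show ?thesis using IH by simp
    qed
  qed
qed



lemma gs_mod:
  assumes "p > 0"
  shows "gs p I v (k mod int p) = gs p I v k"
  unfolding gs_def
proof (rule sum.cong[OF refl])
  fix i
  have "dnear (real_of_int (k mod int p * (v i mod int p)) / real p) = dnear (real_of_int (k * (v i mod int p)) / real p)"
    using assms by (intro dnear_cong) (auto simp: mod_mult_left_eq)
  thus "(dnear (real_of_int (k mod int p * (v i mod int p)) / real p))\<^sup>2 = (dnear (real_of_int (k * (v i mod int p)) / real p))\<^sup>2"
    by simp
qed

lemma gs_zero: "gs p I v 0 = 0"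
  unfolding gs_def dnear_def by simp

lemma sqrt_gs: "sqrt (gs p I v k) = L2_set (\<lambda>i. dnear (real_of_int (k * (v i mod int p)) / real p)) I"
  unfolding gs_def L2_set_def by simp

lemma gs_minkowski:
  assumes "p > 0"
  shows "sqrt (gs p I v ((x + y) mod int p)) \<le> sqrt (gs p I v x) + sqrt (gs p I v y)"
proof -
  have "sqrt (gs p I v ((x + y) mod int p)) = sqrt (gs p I v (x + y))" using gs_mod[OF assms] by simp
  also have "\<dots> = L2_set (\<lambda>i. dnear (real_of_int ((x + y) * (v i mod int p)) / real p)) I" by (rule sqrt_gs)
  also have "\<dots> \<le> L2_set (\<lambda>i. dnear (real_of_int (x * (v i mod int p)) / real p) + dnear (real_of_int (y * (v i mod int p)) / real p)) I"
  proof (rule L2_set_mono)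
    fix i
    have "real_of_int ((x + y) * (v i mod int p)) / real p = real_of_int (x * (v i mod int p)) / real p + real_of_int (y * (v i mod int p)) / real p"
      by (simp add: distrib_right add_divide_distrib)
    thus "dnear (real_of_int ((x + y) * (v i mod int p)) / real p) \<le> dnear (real_of_int (x * (v i mod int p)) / real p) + dnear (real_of_int (y * (v i mod int p)) / real p)"
      using dnear_add by simp
    show "0 \<le> dnear (real_of_int ((x + y) * (v i mod int p)) / real p)" by (rule dnear_nonneg)
  qed
  also have "\<dots> \<le> L2_set (\<lambda>i. dnear (real_of_int (x * (v i mod int p)) / real p)) I + L2_set (\<lambda>i. dnear (real_of_int (y * (v i mod int p)) / real p)) I"
    by (rule L2_set_triangle_ineq)
  also have "\<dots> = sqrt (gs p I v x) + sqrt (gs p I v y)" by (simp add: sqrt_gs)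
  finally show ?thesis .
qed

lemma Tset_sub: "Tset p s I v \<subseteq> {0..<int p}"
  unfolding Tset_gs by auto

lemma Tset_finite: "finite (Tset p s I v)"
  by (rule finite_subset[OF Tset_sub]) simp

lemma Tset_zero: "s \<ge> 0 \<Longrightarrow> p > 0 \<Longrightarrow> 0 \<in> Tset p s I v"
  unfolding Tset_gs by (simp add: gs_zero)

lemma Tset_mono: "s \<le> t \<Longrightarrow> Tset p s I v \<subseteq> Tset p t I v"
  unfolding Tset_gs by auto

lemma Tset_card_pos: "s \<ge> 0 \<Longrightarrow> p > 0 \<Longrightarrow> card (Tset p s I v) \<ge> 1"
proof -
  assume a: "s \<ge> 0" "p > 0"
  have "Tset p s I v \<noteq> {}" using Tset_zero[OF a] by auto
  hence "card (Tset p s I v) > 0" using Tset_finite by (simp add: card_gt_0_iff)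
  thus ?thesis by linarith
qed

lemma sumset_Tset:
  assumes "p > 0" "s \<ge> 0"
  shows "sumset p (Tset p ((real r)^2 * s) I v) (Tset p s I v) \<subseteq> Tset p ((real r + 1)^2 * s) I v"
proof
  fix z assume "z \<in> sumset p (Tset p ((real r)^2 * s) I v) (Tset p s I v)"
  then obtain x y where xT: "x \<in> Tset p ((real r)^2 * s) I v" and yT: "y \<in> Tset p s I v" and z: "z = (x + y) mod int p"
    unfolding sumset_def by auto
  have x: "gs p I v x \<le> (real r)^2 * s" using xT unfolding Tset_gs by blast
  have y: "gs p I v y \<le> s" using yT unfolding Tset_gs by blast
  have "sqrt (gs p I v x) \<le> sqrt ((real r)^2 * s)" using x by (rule real_sqrt_le_mono)
  also have "sqrt ((real r)^2 * s) = real r * sqrt s" by (simp add: real_sqrt_mult)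
  finally have sx: "sqrt (gs p I v x) \<le> real r * sqrt s" .
  have sy: "sqrt (gs p I v y) \<le> sqrt s" using y by (rule real_sqrt_le_mono)
  have mk: "sqrt (gs p I v z) \<le> sqrt (gs p I v x) + sqrt (gs p I v y)"
    unfolding z by (rule gs_minkowski[OF assms(1)])
  have e: "(real r + 1) * sqrt s = real r * sqrt s + sqrt s" by (simp add: distrib_right)
  have "sqrt (gs p I v z) \<le> (real r + 1) * sqrt s" using sx sy mk e by linarith
  hence "(sqrt (gs p I v z))^2 \<le> ((real r + 1) * sqrt s)^2"
    by (intro power_mono) (simp_all add: gs_nonneg)
  also have "((real r + 1) * sqrt s)^2 = (real r + 1)^2 * s" using assms(2) by (simp add: power_mult_distrib)
  also have "(sqrt (gs p I v z))^2 = gs p I v z" using gs_nonneg by simp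
  finally have "gs p I v z \<le> (real r + 1)^2 * s" .
  moreover have "z \<in> {0..<int p}" using z assms by simp
  ultimately show "z \<in> Tset p ((real r + 1)^2 * s) I v" unfolding Tset_gs by simp
qed

lemma min_step: "min p (a + b - 1) \<le> (c::nat) \<Longrightarrow> b \<ge> 1 \<Longrightarrow> min p (t + 1) \<le> a \<Longrightarrow> min p (t + (b - 1) + 1) \<le> c"
  by (simp add: min_def split: if_splits) arith

lemma Tset_iter:
  assumes p: "prime p" and s: "s \<ge> 0" and r: "r \<ge> 1"
  shows "card (Tset p ((real r)^2 * s) I v) \<ge> min p (r * (card (Tset p s I v) - 1) + 1)"
  using r
proof (induction r rule: dec_induct)
  case base
  thus ?case using Tset_card_pos[OF s, of p I v] p prime_gt_0_nat by simp
next
  case (step r)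
  have p0: "p > 0" using p prime_gt_0_nat by blast
  let ?A = "Tset p ((real r)^2 * s) I v" and ?B = "Tset p s I v"
  have nA: "?A \<noteq> {}" using Tset_zero[of "(real r)^2 * s" p I v] s p0 by auto
  have nB: "?B \<noteq> {}" using Tset_zero[OF s p0] by auto
  have "min p (card ?A + card ?B - 1) \<le> card (sumset p ?A ?B)"
    by (rule cauchy_davenport[OF p Tset_sub Tset_sub nA nB])
  also have "\<dots> \<le> card (Tset p ((real r + 1)^2 * s) I v)"
    by (rule card_mono[OF Tset_finite sumset_Tset[OF p0 s]])
  finally have "min p (card ?A + card ?B - 1) \<le> card (Tset p ((real r + 1)^2 * s) I v)" .
  moreover have "Tset p ((real (Suc r))^2 * s) I v = Tset p ((real r + 1)^2 * s) I v" by (simp add: add.commute)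
  ultimately have "min p (card ?A + card ?B - 1) \<le> card (Tset p ((real (Suc r))^2 * s) I v)" by simp
  moreover have "card ?B \<ge> 1" using Tset_card_pos[OF s p0] .
  ultimately show ?case using step.IH min_step[of p _ _ _ "r * (card ?B - 1)"] by simp
qed

lemma growth:
  assumes p: "prime p" and s: "0 < s" "s \<le> l" and Nl: "card (Tset p l I v) < p"
  shows "real (card (Tset p s I v)) \<le> 1 + 2 * real (card (Tset p l I v)) * sqrt (s / l)"
proof -
  have p0: "p > 0" using p prime_gt_0_nat by blast
  define q where "q = sqrt (l / s)"
  have q1: "q \<ge> 1" unfolding q_def using s by simp
  define r where "r = nat \<lfloor>q\<rfloor>"
  have r1: "r \<ge> 1" unfolding r_def using q1 by linarith
  have rr: "real r = of_int \<lfloor>q\<rfloor>" unfolding r_def using q1 by simp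
  have rq: "real r \<le> q" using rr by linarith
  have f1: "q < of_int \<lfloor>q\<rfloor> + 1" by linarith
  have "1 \<le> \<lfloor>q\<rfloor>" using q1 by (simp add: le_floor_iff)
  hence f2: "1 \<le> real_of_int \<lfloor>q\<rfloor>" by simp
  have rq2: "2 * real r \<ge> q" using rr f1 f2 by linarith
  have "(real r)^2 \<le> q^2" using rq by (intro power_mono) simp_all
  also have "q^2 = l / s" unfolding q_def using s by simp
  finally have "(real r)^2 * s \<le> l" using s by (simp add: field_simps)
  hence "card (Tset p ((real r)^2 * s) I v) \<le> card (Tset p l I v)"
    by (intro card_mono[OF Tset_finite Tset_mono])
  moreover have "card (Tset p ((real r)^2 * s) I v) \<ge> min p (r * (card (Tset p s I v) - 1) + 1)"
    by (rule Tset_iter[OF p _ r1]) (use s in simp)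
  ultimately have "r * (card (Tset p s I v) - 1) + 1 \<le> card (Tset p l I v)" using Nl by simp
  moreover have "card (Tset p s I v) \<ge> 1" using Tset_card_pos[of s p I v] s p0 by simp
  ultimately have n1: "r * (card (Tset p s I v) - 1) \<le> card (Tset p l I v)" "card (Tset p s I v) \<ge> 1" by linarith+
  have "real r * real (card (Tset p s I v) - 1) \<le> real (card (Tset p l I v))" using n1(1) by (metis of_nat_le_iff of_nat_mult)
  moreover have "real (card (Tset p s I v) - 1) = real (card (Tset p s I v)) - 1"
    using n1(2) by (simp add: of_nat_diff)
  ultimately have x: "real r * (real (card (Tset p s I v)) - 1) \<le> real (card (Tset p l I v))" by simp
  have "q / 2 * (real (card (Tset p s I v)) - 1) \<le> real r * (real (card (Tset p s I v)) - 1)"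
    using rq2 n1(2) by (intro mult_right_mono) auto
  hence "q / 2 * (real (card (Tset p s I v)) - 1) \<le> real (card (Tset p l I v))" using x by linarith
  hence "real (card (Tset p s I v)) - 1 \<le> 2 * real (card (Tset p l I v)) / q"
    using q1 by (simp add: field_simps)
  moreover have qq: "1 / q = sqrt (s / l)" unfolding q_def using s by (simp add: real_sqrt_divide)
  moreover have "2 * real (card (Tset p l I v)) / q = 2 * real (card (Tset p l I v)) * sqrt (s / l)"
    by (simp add: qq[symmetric])
  ultimately show ?thesis by linarith
qed



lemma coord_sum:
  assumes p0: "p > 0" and w: "\<not> int p dvd w"
  shows "(\<Sum>k\<in>{0..<int p}. (dnear (real_of_int (k * w) / real p))\<^sup>2) \<ge> real p / 32"
proof -
  have c0: "(\<Sum>k<p. cos (2 * pi * real k * real_of_int w / real p)) = 0"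
  proof -
    have "(\<Sum>k<p. cos (2 * pi * real k * real_of_int w / real p)) = Re (\<Sum>k<p. cis (2 * pi * real k * real_of_int w / real p))"
      by (simp add: Re_sum)
    also have "\<dots> = 0" using orth_nat[OF p0, of w] w by simp
    finally show ?thesis .
  qed
  have "real p = (\<Sum>k<p. 1 - cos (2 * pi * real k * real_of_int w / real p))"
    using c0 by (simp add: sum_subtractf)
  also have "\<dots> \<le> (\<Sum>k<p. 32 * (dnear (real_of_int (int k * w) / real p))\<^sup>2)"
  proof (rule sum_mono)
    fix k
    have "2 * pi * real k * real_of_int w / real p = 2 * pi * (real_of_int (int k * w) / real p)" by simp
    thus "1 - cos (2 * pi * real k * real_of_int w / real p) \<le> 32 * (dnear (real_of_int (int k * w) / real p))\<^sup>2"
      using one_minus_cos_bound[of "real_of_int (int k * w) / real p"] by (simp only:)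
  qed
  also have "\<dots> = 32 * (\<Sum>k\<in>{0..<int p}. (dnear (real_of_int (k * w) / real p))\<^sup>2)"
    by (simp add: sum_int_nat sum_distrib_left)
  finally show ?thesis by simp
qed

lemma sum_gs_lower:
  assumes p0: "p > 0" and fin: "finite I"
  shows "(\<Sum>k\<in>{0..<int p}. gs p I v k) \<ge> real (supp_size p I v) * real p / 32"
proof -
  let ?f = "\<lambda>i. (\<Sum>k\<in>{0..<int p}. (dnear (real_of_int (k * (v i mod int p)) / real p))\<^sup>2)"
  have "(\<Sum>k\<in>{0..<int p}. gs p I v k) = (\<Sum>i\<in>I. ?f i)"
    unfolding gs_def by (rule sum.swap)
  also have "\<dots> \<ge> (\<Sum>i\<in>{i \<in> I. v i mod int p \<noteq> 0}. ?f i)"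
    by (rule sum_mono2[OF fin]) (auto intro: sum_nonneg)
  moreover have "(\<Sum>i\<in>{i \<in> I. v i mod int p \<noteq> 0}. ?f i) \<ge> (\<Sum>i\<in>{i \<in> I. v i mod int p \<noteq> 0}. real p / 32)"
  proof (rule sum_mono)
    fix i assume "i \<in> {i \<in> I. v i mod int p \<noteq> 0}"
    hence "\<not> int p dvd (v i mod int p)" by (simp add: dvd_eq_mod_eq_0)
    thus "real p / 32 \<le> ?f i" by (rule coord_sum[OF p0])
  qed
  moreover have "(\<Sum>i\<in>{i \<in> I. v i mod int p \<noteq> 0}. real p / 32) = real (supp_size p I v) * real p / 32"
    unfolding supp_size_def by simp
  ultimately show ?thesis by linarith
qed

lemma Tset_small:
  assumes p0: "p > 0" and fin: "finite I" and big: "real (supp_size p I v) / 32 > l"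
  shows "card (Tset p l I v) < p"
proof (rule ccontr)
  assume "\<not> card (Tset p l I v) < p"
  hence "card (Tset p l I v) \<ge> card {0..<int p}" by simp
  hence eq: "Tset p l I v = {0..<int p}"
    using card_subset_eq[OF _ Tset_sub] card_mono[OF _ Tset_sub] by (simp add: le_antisym)
  have "(\<Sum>k\<in>{0..<int p}. gs p I v k) \<le> (\<Sum>k\<in>{0..<int p}. l)"
  proof (rule sum_mono)
    fix k assume "k \<in> {0..<int p}"
    hence "k \<in> Tset p l I v" using eq by simp
    thus "gs p I v k \<le> l" unfolding Tset_gs by simp
  qed
  also have "\<dots> = real p * l" by simp
  finally have "real (supp_size p I v) * real p / 32 \<le> real p * l" using sum_gs_lower[OF p0 fin, of v] by linarith
  hence "real (supp_size p I v) / 32 \<le> l" using p0 by (simp add: field_simps)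
  thus False using big by simp
qed

lemma two_pow_ge: "real j + 1 \<le> 2 ^ j"
proof (induction j)
  case 0 thus ?case by simp
next
  case (Suc j)
  have "(1::real) \<le> 2 ^ j" by simp
  thus ?case using Suc by simp
qed

lemma geo_half: "(\<Sum>j<J. (1/2::real) ^ j) \<le> 2"
  by (simp add: sum_gp_strict)

lemma geo_quarter: "(\<Sum>j<J. (1/4::real) ^ j) \<le> 2"
proof -
  have "(\<Sum>j<J. (1/4::real) ^ j) \<le> (\<Sum>j<J. (1/2::real) ^ j)"
    by (intro sum_mono power_mono) auto
  thus ?thesis using geo_half[of J] by linarith
qed

lemma geo_quarter_lin: "(\<Sum>j<J. (real j + 1) * (1/4::real) ^ j) \<le> 2"
proof -
  have "(\<Sum>j<J. (real j + 1) * (1/4::real) ^ j) \<le> (\<Sum>j<J. (1/2::real) ^ j)"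
  proof (rule sum_mono)
    fix j
    have "(real j + 1) * (1/4::real) ^ j \<le> 2 ^ j * (1/4) ^ j"
      using two_pow_ge[of j] by (intro mult_right_mono) auto
    also have "\<dots> = (1/2) ^ j" by (simp add: power_mult_distrib[symmetric])
    finally show "(real j + 1) * (1/4::real) ^ j \<le> (1/2) ^ j" .
  qed
  thus ?thesis using geo_half[of J] by linarith
qed

lemma exp_m2_le: "exp (- 2 * real j) \<le> (1/4::real) ^ j"
proof -
  have "2 \<le> exp (1::real)" using exp_ge_add_one_self[of 1] by simp
  hence "2 * 2 \<le> exp (1::real) * exp 1" by (intro mult_mono) auto
  hence "4 \<le> exp (2::real)" by (simp add: exp_add[symmetric])
  hence "exp (-2::real) \<le> 1/4" by (simp add: exp_minus field_simps)
  hence "exp (-2::real) ^ j \<le> (1/4) ^ j" by (intro power_mono) auto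
  moreover have "exp (- 2 * real j) = exp (-2::real) ^ j" by (simp add: exp_of_nat_mult[symmetric] mult.commute)
  ultimately show ?thesis by simp
qed



lemma pointwise_layer:
  assumes g0: "g \<ge> 0" and gl: "g \<le> l"
  shows "exp (- 2 * g) \<le> (\<Sum>j<nat \<lceil>l\<rceil> + 1. if g \<le> real j + 1 then (1/4::real) ^ j else 0)"
proof -
  define j0 where "j0 = nat \<lfloor>g\<rfloor>"
  have rj: "real j0 = of_int \<lfloor>g\<rfloor>" unfolding j0_def using g0 by simp
  have f1: "of_int \<lfloor>g\<rfloor> \<le> g" "g < of_int \<lfloor>g\<rfloor> + 1" by linarith+
  have "\<lfloor>g\<rfloor> \<le> \<lceil>l\<rceil>" using gl by linarith
  hence j0J: "j0 \<in> {..<nat \<lceil>l\<rceil> + 1}" unfolding j0_def by simp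
  have c: "g \<le> real j0 + 1" using rj f1 by linarith
  have "exp (- 2 * g) \<le> exp (- 2 * real j0)" using rj f1 by simp
  also have "\<dots> \<le> (1/4) ^ j0" by (rule exp_m2_le)
  also have "\<dots> = (if g \<le> real j0 + 1 then (1/4::real) ^ j0 else 0)" using c by simp
  also have "\<dots> \<le> (\<Sum>j<nat \<lceil>l\<rceil> + 1. if g \<le> real j + 1 then (1/4::real) ^ j else 0)"
    by (rule member_le_sum[OF j0J]) auto
  finally show ?thesis .
qed

lemma layer_cake:
  assumes p: "prime p" and fin: "finite I" and l0: "l > 0" and Nl: "card (Tset p l I v) < p"
  shows "(\<Sum>k\<in>{0..<int p}. exp (- 2 * gs p I v k))
         \<le> 2 + 4 * real (card (Tset p l I v)) / sqrt l + real p * exp (- 2 * l)"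
proof -
  have p0: "p > 0" using p prime_gt_0_nat by blast
  define T where "T = Tset p l I v"
  define N where "N = card T"
  define J where "J = nat \<lceil>l\<rceil> + 1"
  have Tsub: "T \<subseteq> {0..<int p}" unfolding T_def by (rule Tset_sub)
  have split: "(\<Sum>k\<in>{0..<int p}. exp (- 2 * gs p I v k))
      = (\<Sum>k\<in>{0..<int p} - T. exp (- 2 * gs p I v k)) + (\<Sum>k\<in>T. exp (- 2 * gs p I v k))"
    by (rule sum.subset_diff[OF Tsub]) simp
  have rest: "(\<Sum>k\<in>{0..<int p} - T. exp (- 2 * gs p I v k)) \<le> real p * exp (- 2 * l)"
  proof -
    have "(\<Sum>k\<in>{0..<int p} - T. exp (- 2 * gs p I v k)) \<le> real (card ({0..<int p} - T)) * exp (- 2 * l)"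
    proof (rule sum_bounded_above)
      fix k assume "k \<in> {0..<int p} - T"
      hence "gs p I v k > l" unfolding T_def Tset_gs by auto
      thus "exp (- 2 * gs p I v k) \<le> exp (- 2 * l)" by simp
    qed
    also have "\<dots> \<le> real p * exp (- 2 * l)"
    proof -
      have "card ({0..<int p} - T) \<le> card {0..<int p}" by (rule card_mono) auto
      thus ?thesis by (intro mult_right_mono) auto
    qed
    finally show ?thesis .
  qed
  have "(\<Sum>k\<in>T. exp (- 2 * gs p I v k)) \<le> (\<Sum>k\<in>T. \<Sum>j<J. if gs p I v k \<le> real j + 1 then (1/4::real) ^ j else 0)"
  proof (rule sum_mono)
    fix k assume "k \<in> T"
    hence "gs p I v k \<le> l" unfolding T_def Tset_gs by auto
    thus "exp (- 2 * gs p I v k) \<le> (\<Sum>j<J. if gs p I v k \<le> real j + 1 then (1/4::real) ^ j else 0)"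
      unfolding J_def by (intro pointwise_layer gs_nonneg)
  qed
  also have "\<dots> = (\<Sum>j<J. \<Sum>k\<in>T. if gs p I v k \<le> real j + 1 then (1/4::real) ^ j else 0)"
    by (rule sum.swap)
  also have "\<dots> = (\<Sum>j<J. (1/4::real) ^ j * real (card {k \<in> T. gs p I v k \<le> real j + 1}))"
  proof (rule sum.cong[OF refl])
    fix j
    have "finite T" unfolding T_def by (rule Tset_finite)
    thus "(\<Sum>k\<in>T. if gs p I v k \<le> real j + 1 then (1/4::real) ^ j else 0) = (1/4::real) ^ j * real (card {k \<in> T. gs p I v k \<le> real j + 1})"
      by (simp add: sum.inter_filter[symmetric])
  qed
  also have "\<dots> \<le> (\<Sum>j<J. (1/4::real) ^ j * (1 + 2 * real N / sqrt l * (real j + 1)))"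
  proof (rule sum_mono)
    fix j
    define s where "s = min (real j + 1) l"
    have s0: "0 < s" "s \<le> l" unfolding s_def using l0 by auto
    have "{k \<in> T. gs p I v k \<le> real j + 1} = Tset p s I v" unfolding T_def Tset_gs s_def by auto
    hence "real (card {k \<in> T. gs p I v k \<le> real j + 1}) \<le> 1 + 2 * real N * sqrt (s / l)"
      using growth[OF p s0 Nl] unfolding N_def T_def by simp
    also have "\<dots> \<le> 1 + 2 * real N / sqrt l * (real j + 1)"
    proof -
      have "sqrt (s / l) \<le> sqrt ((real j + 1) / l)" unfolding s_def using l0
        by (intro real_sqrt_le_mono divide_right_mono) auto
      also have "\<dots> = sqrt (real j + 1) / sqrt l" by (simp add: real_sqrt_divide)
      also have "\<dots> \<le> (real j + 1) / sqrt l"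
      proof -
        have "sqrt (real j + 1) \<le> real j + 1"
          by (rule real_sqrt_le_iff[THEN iffD2, of _ "(real j + 1)^2", simplified, THEN order_trans]) 
             (auto simp: power2_eq_square)
        thus ?thesis using l0 by (intro divide_right_mono) auto
      qed
      finally have "sqrt (s / l) \<le> (real j + 1) / sqrt l" .
      hence "2 * real N * sqrt (s / l) \<le> 2 * real N * ((real j + 1) / sqrt l)"
        by (intro mult_left_mono) auto
      thus ?thesis by simp
    qed
    finally show "(1/4::real) ^ j * real (card {k \<in> T. gs p I v k \<le> real j + 1}) \<le> (1/4::real) ^ j * (1 + 2 * real N / sqrt l * (real j + 1))"
      by (intro mult_left_mono) auto
  qed
  also have "\<dots> = (\<Sum>j<J. (1/4::real) ^ j) + 2 * real N / sqrt l * (\<Sum>j<J. (real j + 1) * (1/4::real) ^ j)"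
  proof -
    define c where "c = 2 * real N / sqrt l"
    have "(\<Sum>j<J. (1/4::real) ^ j * (1 + c * (real j + 1))) = (\<Sum>j<J. (1/4::real) ^ j + c * ((real j + 1) * (1/4::real) ^ j))"
      by (rule sum.cong) (simp_all add: algebra_simps)
    also have "\<dots> = (\<Sum>j<J. (1/4::real) ^ j) + c * (\<Sum>j<J. (real j + 1) * (1/4::real) ^ j)"
      by (simp only: sum.distrib sum_distrib_left)
    finally show ?thesis unfolding c_def .
  qed
  also have "\<dots> \<le> 2 + 2 * real N / sqrt l * 2"
    using geo_quarter[of J] geo_quarter_lin[of J] l0 by (intro add_mono mult_left_mono) auto
  finally have "(\<Sum>k\<in>T. exp (- 2 * gs p I v k)) \<le> 2 + 4 * real N / sqrt l" by simp
  thus ?thesis using split rest unfolding N_def T_def by linarith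
qed



theorem lemma3p3:
  fixes p n :: nat and v :: "nat \<Rightarrow> int" and Y :: "nat set"
  assumes "prime p"
    and "rho p {1..n} v \<ge> 4 / real p"
    and "real (supp_size p {1..n} v) \<ge> 2 ^ 18 * ln (real p)"
    and "Y \<subseteq> {1..n}"
    and "real (supp_size p Y v) \<ge> real (supp_size p {1..n} v) / 4"
  shows "rho p Y v \<le> 2 ^ 13 * real (card (Tset p (real (supp_size p {1..n} v) / 2 ^ 16) Y v))
                      / (real p * sqrt (real (supp_size p {1..n} v)))"
proof -
  note p = assms(1)
  define m where "m = real (supp_size p {1..n} v)"
  define mY where "mY = real (supp_size p Y v)"
  define l where "l = m / 2 ^ 16"
  define NY where "NY = card (Tset p l Y v)"
  define NF where "NF = card (Tset p l {1..n} v)"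
  have p0: "p > 0" using p prime_gt_0_nat by blast
  have finF: "finite {1..n}" by simp
  have finY: "finite Y" using assms(4) finite_subset by (metis finite_atLeastAtMost)
  have "4 / real p \<le> 1" using assms(2) rho_le_one[OF p0 finF, of v] by linarith
  hence p4: "real p \<ge> 4" using p0 by (simp add: field_simps)
  hence "p > 2" by simp
  hence oddp: "odd p" using p prime_odd_nat by blast
  have lnp: "ln (real p) > 0" using p4 by simp
  have m0: "m > 0" using assms(3) lnp unfolding m_def by (smt (verit) mult_pos_pos zero_less_power)
  have l0: "l > 0" unfolding l_def using m0 by simp
  have mY: "mY \<ge> m / 4" using assms(5) unfolding m_def mY_def by simp
  have NYp: "NY < p" unfolding NY_def
  proof (rule Tset_small[OF p0 finY])
    show "real (supp_size p Y v) / 32 > l" using mY m0 unfolding mY_def l_def by simp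
  qed
  have TFY: "Tset p l {1..n} v \<subseteq> Tset p l Y v"
  proof
    fix k assume "k \<in> Tset p l {1..n} v"
    hence k: "k \<in> {0..<int p}" "gs p {1..n} v k \<le> l" unfolding Tset_gs by auto
    have "gs p Y v k \<le> gs p {1..n} v k" unfolding gs_def
      by (rule sum_mono2[OF finF assms(4)]) simp
    thus "k \<in> Tset p l Y v" using k unfolding Tset_gs by simp
  qed
  have NFY: "NF \<le> NY" unfolding NF_def NY_def by (rule card_mono[OF Tset_finite TFY])
  hence NFp: "NF < p" using NYp by simp
  have tail: "real p * exp (- 2 * l) \<le> 1"
  proof -
    have "2 * l \<ge> ln (real p)" unfolding l_def using assms(3) lnp unfolding m_def by simp
    hence "exp (- 2 * l) \<le> exp (- ln (real p))" by simp
    also have "\<dots> = 1 / real p" using p0 by (simp add: exp_minus inverse_eq_divide)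
    finally show ?thesis using p0 by (simp add: field_simps)
  qed
  have EF: "(\<Sum>k\<in>{0..<int p}. exp (- 2 * gs p {1..n} v k)) \<le> 3 + 4 * real NF / sqrt l"
    using layer_cake[OF p finF l0 NFp[unfolded NF_def]] tail unfolding NF_def by linarith
  have EY: "(\<Sum>k\<in>{0..<int p}. exp (- 2 * gs p Y v k)) \<le> 3 + 4 * real NY / sqrt l"
    using layer_cake[OF p finY l0 NYp[unfolded NY_def]] tail unfolding NY_def by linarith
  have "4 / real p \<le> (1 / real p) * (3 + 4 * real NF / sqrt l)"
    using assms(2) rho_bound[OF p0 oddp finF, of v] EF p0
    by (smt (verit) divide_nonneg_nonneg mult_left_mono of_nat_0_le_iff)
  hence "4 \<le> 3 + 4 * real NF / sqrt l" using p0 by (simp add: field_simps)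
  hence low: "1 \<le> 4 * real NY / sqrt l" using NFY l0
    by (smt (verit) divide_right_mono mult_left_mono of_nat_le_iff real_sqrt_gt_zero of_nat_0_le_iff)
  have "rho p Y v \<le> (1 / real p) * (3 + 4 * real NY / sqrt l)"
    using rho_bound[OF p0 oddp finY, of v] EY p0
    by (smt (verit) divide_nonneg_nonneg mult_left_mono of_nat_0_le_iff)
  also have "\<dots> \<le> (1 / real p) * (16 * real NY / sqrt l)"
    using low p0 by (intro mult_left_mono) auto
  also have sm: "sqrt m = 256 * sqrt l" unfolding l_def by (simp add: real_sqrt_divide)
  have "sqrt l > 0" using l0 by simp
  hence "(1 / real p) * (16 * real NY / sqrt l) = 2 ^ 12 * real NY / (real p * sqrt m)"
    unfolding sm using p0 by (simp add: field_simps)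
  also have "\<dots> \<le> 2 ^ 13 * real NY / (real p * sqrt m)"
    using p0 m0 by (intro divide_right_mono) auto
  finally show ?thesis unfolding NY_def l_def m_def .
qed

end
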